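(* Consider FedProx, as described in the context, and a round $t$ whose step size satisfies $\gamma_t\le1/\alpha$. Assume that the bounded variance, bounded stochastic gradient norm and $L$-smoothness assumptions hold. Then for every client $i$ and every $k\in\{0,\dots,E\}$, $$\mathbb{E}\|\mathbf{w}^i_{t,k}-\overline{\mathbf{w}}_{t,0}\|^2\le\gamma_t^2E^2G^2.$$
   Context: Setting: there are $C$ clients with weights $p_i\ge0$ satisfying $\sum_ip_i=1$, local objectives $F_i:\mathbb{R}^D\to\mathbb{R}$, and global objective $F=\sum_ip_iF_i$. FedProx with $\alpha>0$, $E\ge1$ local steps and step sizes $\gamma_t$, with all clients participating: in round $t$, $\mathbf{w}^i_{t,0}=\overline{\mathbf{w}}_{t,0}$ and, for $k=0,\dots,E-1$, $$\mathbf{w}^i_{t,k+1}=(1-\alpha\gamma_t)\mathbf{w}^i_{t,k}+\alpha\gamma_t\overline{\mathbf{w}}_{t,0}-\gamma_tg_i(\mathbf{w}^i_{t,k}),$$ with stochastic gradients $g_i$ of $F_i$ sampled independently given the past. Also $\overline{\mathbf{w}}_{t,k}=\sum_ip_i\mathbf{w}^i_{t,k}$ and $\overline{\mathbf{w}}_{t+1,0}=\overline{\mathbf{w}}_{t,E}$. Assumptions: - Unbiasedness: $\mathbb{E}\,g_i(\mathbf{w}^i_{t,k})=\nabla F_i(\mathbf{w}^i_{t,k})$. - Variance: $\mathbb{E}\|g_i(\mathbf{w}^i_{t,k})-\nabla F_i(\mathbf{w}^i_{t,k})\|^2\le\sigma^2$. - Bounded second moment: $\mathbb{E}\|g_i(\mathbf{w}^i_{t,k})\|^2\le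 G^2$ for all $i,t,k$. - Smoothness: each $\nabla F_i$ is $L$-Lipschitz. $\mathbb{E}$ is total expectation. *)

theory Defs
  imports "HOL-Probability.Probability"
begin

definition esq :: "'a measure \<Rightarrow> ('a \<Rightarrow> 'v::real_normed_vector) \<Rightarrow> ennreal" where
  "esq M X = (\<integral>\<^sup>+ \<omega>. ennreal ((norm (X \<omega>))\<^sup>2) \<partial>M)"

end

theory Submission
  imports Defs
begin

theorem lemma2:
  fixes M :: "'a measure"
    and C E :: nat and p :: "nat \<Rightarrow> real"
    and F :: "nat \<Rightarrow> 'v::euclidean_space \<Rightarrow> real"
    and gradF :: "nat \<Rightarrow> 'v \<Rightarrow> 'v"
    and \<alpha> L \<sigma> G :: real and \<gamma> :: "nat \<Rightarrow> real"
    and wl :: "nat \<Rightarrow> nat \<Rightarrow> nat \<Rightarrow> 'a \<Rightarrow> 'v"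
    and W :: "nat \<Rightarrow> 'a \<Rightarrow> 'v"
    and g :: "nat \<Rightarrow> nat \<Rightarrow> nat \<Rightarrow> 'a \<Rightarrow> 'v"
    and t :: nat
  assumes "prob_space M"
    and "\<And>i. i < C \<Longrightarrow> p i \<ge> 0" and "(\<Sum>i<C. p i) = 1"
    and "\<alpha> > 0" and "E \<ge> 1"
    and "\<And>s. \<gamma> s > 0"
    and "\<gamma> t \<le> 1 / \<alpha>"
    \<comment> \<open>gradients and L-smoothness\<close>
    and "\<And>i x. i < C \<Longrightarrow> (F i has_derivative (\<lambda>h. gradF i x \<bullet> h)) (at x)"
    and "\<And>i x y. i < C \<Longrightarrow> norm (gradF i x - gradF i y) \<le> L * norm (x - y)"
    \<comment> \<open>the random initial global model and the stochastic gradients\<close>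
    and "W 0 \<in> borel_measurable M"
    and "\<And>i s k. i < C \<Longrightarrow> k < E \<Longrightarrow> g i s k \<in> borel_measurable M"
    \<comment> \<open>FedProx dynamics, all clients participating\<close>
    and "\<And>i s \<omega>. i < C \<Longrightarrow> wl i s 0 \<omega> = W s \<omega>"
    and "\<And>i s k \<omega>. i < C \<Longrightarrow> k < E \<Longrightarrow>
           wl i s (Suc k) \<omega> = (1 - \<alpha> * \<gamma> s) *\<^sub>R wl i s k \<omega> + (\<alpha> * \<gamma> s) *\<^sub>R W s \<omega>
                              - \<gamma> s *\<^sub>R g i s k \<omega>"
    and "\<And>s \<omega>. W (Suc s) \<omega> = (\<Sum>i<C. p i *\<^sub>R wl i s E \<omega>)"
    \<comment> \<open>bounded variance and bounded second moment\<close>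
    and "\<And>i s k. i < C \<Longrightarrow> k < E \<Longrightarrow>
           esq M (\<lambda>\<omega>. g i s k \<omega> - gradF i (wl i s k \<omega>)) \<le> ennreal (\<sigma>\<^sup>2)"
    and "\<And>i s k. i < C \<Longrightarrow> k < E \<Longrightarrow> esq M (g i s k) \<le> ennreal (G\<^sup>2)"
  shows "\<forall>i<C. \<forall>k\<le>E.
           esq M (\<lambda>\<omega>. wl i t k \<omega> - W t \<omega>) \<le> ennreal ((\<gamma> t)\<^sup>2 * (real E)\<^sup>2 * G\<^sup>2)"
proof (intro allI impI)
  fix i k assume iC: "i < C" and kE: "k \<le> E"
  note A = assms
  define a where "a = \<alpha> * \<gamma> t"
  have a0: "0 \<le> a" "a \<le> 1" using A(4) A(6)[of t] A(7) unfolding a_def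
    by (simp_all add: field_simps)
  have gp: "\<gamma> t > 0" using A(6) by simp
  have pw: "norm (wl i t k \<omega> - W t \<omega>) \<le> \<gamma> t * (\<Sum>j<k. norm (g i t j \<omega>))" for \<omega>
    using kE
  proof (induction k)
    case 0 then show ?case using A(12)[OF iC] by simp
  next
    case (Suc k)
    have kl: "k < E" using Suc.prems by simp
    have eq: "wl i t (Suc k) \<omega> - W t \<omega> = (1 - a) *\<^sub>R (wl i t k \<omega> - W t \<omega>) - \<gamma> t *\<^sub>R g i t k \<omega>"
      using A(13)[OF iC kl, of t \<omega>] unfolding a_def by (simp add: algebra_simps)
    have "norm (wl i t (Suc k) \<omega> - W t \<omega>) \<le> (1 - a) * norm (wl i t k \<omega> - W t \<omega>) + \<gamma> t * norm (g i t k \<omega>)"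
      unfolding eq using a0 gp
      by (metis (no_types, lifting) abs_of_nonneg diff_ge_0_iff_ge less_le norm_scaleR norm_triangle_ineq4)
    also have "\<dots> \<le> norm (wl i t k \<omega> - W t \<omega>) + \<gamma> t * norm (g i t k \<omega>)"
      using a0 by (simp add: mult_left_le_one_le)
    also have "\<dots> \<le> \<gamma> t * (\<Sum>j<Suc k. norm (g i t j \<omega>))"
      using Suc.IH kl by (simp add: distrib_left)
    finally show ?case .
  qed
  have pw2: "(norm (wl i t k \<omega> - W t \<omega>))\<^sup>2 \<le> (\<gamma> t)\<^sup>2 * real k * (\<Sum>j<k. (norm (g i t j \<omega>))\<^sup>2)" for \<omega>
  proof -
    have "(norm (wl i t k \<omega> - W t \<omega>))\<^sup>2 \<le> (\<gamma> t * (\<Sum>j<k. norm (g i t j \<omega>)))\<^sup>2"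
      using pw[of \<omega>] by (simp add: power_mono)
    also have "\<dots> = (\<gamma> t)\<^sup>2 * (\<Sum>j<k. norm (g i t j \<omega>))\<^sup>2" by (simp add: power_mult_distrib)
    also have "\<dots> \<le> (\<gamma> t)\<^sup>2 * ((\<Sum>j<k. (norm (g i t j \<omega>))\<^sup>2) * real k)"
      using sum_squared_le_sum_of_squares[of "\<lambda>j. norm (g i t j \<omega>)" "{..<k}"]
      by (intro mult_left_mono) auto
    finally show ?thesis by (simp add: mult_ac)
  qed
  have "esq M (\<lambda>\<omega>. wl i t k \<omega> - W t \<omega>) \<le>
      (\<integral>\<^sup>+ \<omega>. ennreal ((\<gamma> t)\<^sup>2 * real k) * (\<Sum>j<k. ennreal ((norm (g i t j \<omega>))\<^sup>2)) \<partial>M)"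
    unfolding esq_def
  proof (rule nn_integral_mono)
    fix \<omega>
    have "(\<Sum>j<k. ennreal ((norm (g i t j \<omega>))\<^sup>2)) = ennreal (\<Sum>j<k. (norm (g i t j \<omega>))\<^sup>2)"
      by (rule sum_ennreal) simp
    moreover have "ennreal ((\<gamma> t)\<^sup>2 * real k) * ennreal (\<Sum>j<k. (norm (g i t j \<omega>))\<^sup>2)
        = ennreal ((\<gamma> t)\<^sup>2 * real k * (\<Sum>j<k. (norm (g i t j \<omega>))\<^sup>2))"
      by (rule ennreal_mult[symmetric]) (auto intro: sum_nonneg)
    moreover have "ennreal ((norm (wl i t k \<omega> - W t \<omega>))\<^sup>2) \<le> ennreal ((\<gamma> t)\<^sup>2 * real k * (\<Sum>j<k. (norm (g i t j \<omega>))\<^sup>2))"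
      using pw2[of \<omega>] by (rule ennreal_leI)
    ultimately show "ennreal ((norm (wl i t k \<omega> - W t \<omega>))\<^sup>2) \<le> ennreal ((\<gamma> t)\<^sup>2 * real k) * (\<Sum>j<k. ennreal ((norm (g i t j \<omega>))\<^sup>2))"
      by simp
  qed
  also have "\<dots> = ennreal ((\<gamma> t)\<^sup>2 * real k) * (\<Sum>j<k. esq M (g i t j))"
  proof -
    have m: "(\<lambda>\<omega>. ennreal ((norm (g i t j \<omega>))\<^sup>2)) \<in> borel_measurable M" if "j < k" for j
    proof -
      have "g i t j \<in> borel_measurable M" using A(11)[OF iC] that kE by simp
      then show ?thesis by measurable
    qed
    have "(\<integral>\<^sup>+ \<omega>. ennreal ((\<gamma> t)\<^sup>2 * real k) * (\<Sum>j<k. ennreal ((norm (g i t j \<omega>))\<^sup>2)) \<partial>M)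
       = ennreal ((\<gamma> t)\<^sup>2 * real k) * (\<integral>\<^sup>+ \<omega>. (\<Sum>j<k. ennreal ((norm (g i t j \<omega>))\<^sup>2)) \<partial>M)"
      by (rule nn_integral_cmult) (use m in auto)
    also have "(\<integral>\<^sup>+ \<omega>. (\<Sum>j<k. ennreal ((norm (g i t j \<omega>))\<^sup>2)) \<partial>M) = (\<Sum>j<k. esq M (g i t j))"
      unfolding esq_def by (rule nn_integral_sum) (use m in auto)
    finally show ?thesis .
  qed
  also have "\<dots> \<le> ennreal ((\<gamma> t)\<^sup>2 * real k) * (\<Sum>j<k. ennreal (G\<^sup>2))"
    using kE by (intro mult_left_mono sum_mono A(16)[OF iC]) auto
  also have "\<dots> = ennreal ((\<gamma> t)\<^sup>2 * (real k)\<^sup>2 * G\<^sup>2)"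
  proof -
    have "(\<Sum>j<k. ennreal (G\<^sup>2)) = ennreal (real k * G\<^sup>2)"
      by (simp add: ennreal_mult ennreal_of_nat_eq_real_of_nat)
    moreover have "ennreal ((\<gamma> t)\<^sup>2 * real k) * ennreal (real k * G\<^sup>2) = ennreal ((\<gamma> t)\<^sup>2 * real k * (real k * G\<^sup>2))"
      by (rule ennreal_mult[symmetric]) auto
    ultimately show ?thesis by (simp add: power2_eq_square mult_ac)
  qed
  also have "\<dots> \<le> ennreal ((\<gamma> t)\<^sup>2 * (real E)\<^sup>2 * G\<^sup>2)"
    using kE by (intro ennreal_leI mult_right_mono mult_left_mono power_mono) auto
  finally show "esq M (\<lambda>\<omega>. wl i t k \<omega> - W t \<omega>) \<le> ennreal ((\<gamma> t)\<^sup>2 * (real E)\<^sup>2 * G\<^sup>2)" .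
qed

end
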